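(* With the notation of the context, let $N\ge2$, $\eta>0$ be a constant, and $Q$ a probability distribution on $\{\alpha_1,\dots,\alpha_N\}$. (i) If $Q(\alpha_i)<Q^*(\alpha_i)+\eta/N^2$ for all $i$, then $L(Q)<H(p)+D(p\|q)+\eta/N$. (ii) If $Q(\alpha_i)<Q^*(\alpha_i)+\eta/(N\lg N)$ for all $i$, then $L(Q)<H(p)+D(p\|q)+\eta/\lg N$. (iii) If $Q(\alpha_i)<Q^*(\alpha_i)+\eta/N$ for all $i$, then $L(Q)<H(p)+D(p\|q)+\eta$.
   Context: Let $\mathcal S$ be a finite alphabet with $|\mathcal S|\ge2$, $p$ a probability distribution on $\mathcal S$ with $p(s)>0$, $N_s$ ($s\in\mathcal S$) positive integers, $N=\sum_sN_s$, $q(s)=N_s/N$, $\lg=\log_2$, and $\kappa_s=\lceil\lg(N/N_s)\rceil$ (so $\kappa_s\ge1$ and $N\le 2^{\kappa_s}N_s<2N$). Let $\alpha_1,\dots,\alpha_N$ be the states. For a probability distribution $Q$ on $\{\alpha_1,\dots,\alpha_N\}$ define $L(Q)=\sum_s p(s)\sum_{i=1}^N Q(\alpha_i)\ell_s(i)$, where $\ell_s(i)=\kappa_s-1$ if $i\le 2^{\kappa_s}N_s-N$ and $\ell_s(i)=\kappa_s$ otherwise. (This is the average code length of the Yokoo–Dubé-type sAEDS, whose state $\alpha_i$ encodes $s$ with $\ell_s(i)$ bits, when $Q$ is its stationary distribution with states indexed in non-increasing order of $Q$.) $Q^*(\alpha_i)=\lg\frac{N+i}{N+i-1}$, which sums to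 1. $H(p)=-\sum p\lg p$, $D(p\|q)=\sum p\lg(p/q)$. *)

theory Defs
  imports "HOL-Analysis.Analysis"
begin

(* Alphabet S (finite set), probability p on S, multiplicities Ns :: 'a => nat.
   States alpha_1..alpha_N are represented by their indices i in {1..N}. *)

definition totN :: "'a set \<Rightarrow> ('a \<Rightarrow> nat) \<Rightarrow> nat" where
  "totN S Ns = (\<Sum>s\<in>S. Ns s)"

definition kappa :: "'a set \<Rightarrow> ('a \<Rightarrow> nat) \<Rightarrow> 'a \<Rightarrow> nat" where
  "kappa S Ns s = nat \<lceil>log 2 (real (totN S Ns) / real (Ns s))\<rceil>"

definition ell :: "'a set \<Rightarrow> ('a \<Rightarrow> nat) \<Rightarrow> 'a \<Rightarrow> nat \<Rightarrow> nat" where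
  "ell S Ns s i = (if i \<le> 2 ^ kappa S Ns s * Ns s - totN S Ns
                   then kappa S Ns s - 1 else kappa S Ns s)"

definition avg_len :: "'a set \<Rightarrow> ('a \<Rightarrow> real) \<Rightarrow> ('a \<Rightarrow> nat) \<Rightarrow> (nat \<Rightarrow> real) \<Rightarrow> real" where
  "avg_len S p Ns Q = (\<Sum>s\<in>S. p s * (\<Sum>i=1..totN S Ns. Q i * real (ell S Ns s i)))"

definition Qstar :: "nat \<Rightarrow> nat \<Rightarrow> real" where
  "Qstar N i = log 2 (real (N + i) / real (N + i - 1))"

definition entropy2 :: "'a set \<Rightarrow> ('a \<Rightarrow> real) \<Rightarrow> real" where
  "entropy2 S p = - (\<Sum>s\<in>S. p s * log 2 (p s))"

definition kl2 :: "'a set \<Rightarrow> ('a \<Rightarrow> real) \<Rightarrow> ('a \<Rightarrow> real) \<Rightarrow> real" where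
  "kl2 S p q = (\<Sum>s\<in>S. p s * log 2 (p s / q s))"

definition qdist :: "'a set \<Rightarrow> ('a \<Rightarrow> nat) \<Rightarrow> 'a \<Rightarrow> real" where
  "qdist S Ns s = real (Ns s) / real (totN S Ns)"

end

theory Submission
  imports Defs
begin

lemma qstar_tele:
  assumes "N \<ge> 1"
  shows "(\<Sum>i=1..m. Qstar N i) = log 2 (real (N + m) / real N)"
proof (induction m)
  case 0
  then show ?case using assms by simp
next
  case (Suc m)
  have "(\<Sum>i=1..Suc m. Qstar N i) = log 2 (real (N + m) / real N) + Qstar N (Suc m)"
    using Suc by simp
  also have "\<dots> = log 2 (real (N + m) / real N) + log 2 (real (N + Suc m) / real (N + m))"
    by (simp add: Qstar_def)
  also have "\<dots> = log 2 (real (N + Suc m) / real N)"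
    using assms by (simp add: log_divide_pos)
  finally show ?case .
qed

lemma kappa_bounds:
  fixes N n k :: nat
  assumes "0 < n" "n \<le> N" "k = nat \<lceil>log 2 (real N / real n)\<rceil>"
  shows "N \<le> 2 ^ k * n" "2 ^ k * n < 2 * N"
proof -
  have pos: "real N / real n > 0" using assms by simp
  have ge1: "real N / real n \<ge> 1" using assms by simp
  have lg0: "log 2 (real N / real n) \<ge> 0" using ge1 by simp
  have rk: "real k = of_int \<lceil>log 2 (real N / real n)\<rceil>" using assms(3) lg0 by simp
  have a: "log 2 (real N / real n) \<le> real k" using rk by linarith
  have b: "real k < log 2 (real N / real n) + 1" using rk by linarith
  have "\<not> (real k < log 2 (real N / real n))" using a by simp
  hence "\<not> (2 powr real k < real N / real n)" using less_log_iff[OF _ pos, of 2] by simp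
  hence "real N / real n \<le> 2 ^ k" by (simp add: powr_realpow)
  hence "real N \<le> 2 ^ k * real n" using assms by (simp add: field_simps)
  hence "real N \<le> real (2 ^ k * n)" by simp
  thus "N \<le> 2 ^ k * n" by (simp only: of_nat_le_iff)
  have "real k - 1 < log 2 (real N / real n)" using b by simp
  hence "2 powr (real k - 1) < real N / real n" using less_log_iff[OF _ pos, of 2] by simp
  hence "2 powr real k / 2 < real N / real n" by (simp add: powr_diff)
  hence "2 ^ k < 2 * (real N / real n)" by (simp add: powr_realpow field_simps)
  hence "2 ^ k * real n < 2 * real N" using assms by (simp add: field_simps)
  hence "real (2 ^ k * n) < real (2 * N)" by simp
  thus "2 ^ k * n < 2 * N" by (simp only: of_nat_less_iff)
qed

lemma sum_ell:
  fixes N m k :: nat and R :: "nat \<Rightarrow> real"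
  assumes "m \<le> N" "m \<ge> 1 \<Longrightarrow> k \<ge> 1"
    and "\<And>i. ell_i i = (if i \<le> m then k - 1 else k)"
  shows "(\<Sum>i=1..N. R i * real (ell_i i)) = real k * (\<Sum>i=1..N. R i) - (\<Sum>i=1..m. R i)"
proof -
  have e: "real (ell_i i) = real k - (if i \<le> m then 1 else 0)" if "i \<in> {1..N}" for i
    using that assms by (auto simp: of_nat_diff)
  have "(\<Sum>i=1..N. R i * real (ell_i i)) = (\<Sum>i=1..N. real k * R i - (if i \<le> m then R i else 0))"
    by (rule sum.cong) (auto simp: e algebra_simps)
  also have "\<dots> = real k * (\<Sum>i=1..N. R i) - (\<Sum>i=1..N. (if i \<le> m then R i else 0))"
    by (simp add: sum_subtractf sum_distrib_left)
  also have "(\<Sum>i=1..N. (if i \<le> m then R i else 0)) = (\<Sum>i\<in>{1..N} \<inter> {i. i \<le> m}. R i)"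
    by (simp add: sum.inter_restrict)
  also have "{1..N} \<inter> {i. i \<le> m} = {1..m}" using assms(1) by auto
  finally show ?thesis .
qed

lemma main_bound:
  fixes S :: "'a set" and p :: "'a \<Rightarrow> real" and Ns :: "'a \<Rightarrow> nat"
    and Q :: "nat \<Rightarrow> real" and \<epsilon> :: real
  assumes fin: "finite S" and card: "card S \<ge> 2"
    and ppos: "\<forall>s\<in>S. p s > 0" and psum: "(\<Sum>s\<in>S. p s) = 1"
    and Npos: "\<forall>s\<in>S. Ns s > 0"
    and N2: "totN S Ns \<ge> 2"
    and eps: "\<epsilon> > 0"
    and Qsum: "(\<Sum>i=1..totN S Ns. Q i) = 1"
    and Qlt: "\<forall>i\<in>{1..totN S Ns}. Q i < Qstar (totN S Ns) i + \<epsilon>"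
  shows "avg_len S p Ns Q < entropy2 S p + kl2 S p (qdist S Ns) + real (totN S Ns) * \<epsilon>"
proof -
  define N where "N = totN S Ns"
  have N1: "N \<ge> 1" using N2 N_def by simp
  have Qssum: "(\<Sum>i=1..N. Qstar N i) = 1"
    using qstar_tele[OF N1, of N] N1 by simp
  have per: "(\<Sum>i=1..N. Q i * real (ell S Ns s i)) < log 2 (real N / real (Ns s)) + real N * \<epsilon>"
    if s: "s \<in> S" for s
  proof -
    define k where "k = kappa S Ns s"
    define m where "m = 2 ^ k * Ns s - N"
    have nle: "Ns s \<le> N" unfolding N_def totN_def
      using member_le_sum[OF s _ fin, of Ns] by simp
    have np: "Ns s > 0" using Npos s by simp
    have kb: "N \<le> 2 ^ k * Ns s" "2 ^ k * Ns s < 2 * N"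
      using kappa_bounds[OF np nle, of k] by (simp_all add: k_def kappa_def N_def)
    have mN: "m < N" using kb m_def by simp
    have mk: "k \<ge> 1" if "m \<ge> 1"
    proof (rule ccontr)
      assume "\<not> k \<ge> 1" hence "k = 0" by simp
      thus False using that m_def nle by simp
    qed
    have ell_eq: "\<And>i. ell S Ns s i = (if i \<le> m then k - 1 else k)"
      by (simp add: ell_def k_def m_def N_def)
    have sQ: "(\<Sum>i=1..N. Q i * real (ell S Ns s i)) = real k - (\<Sum>i=1..m. Q i)"
      using sum_ell[of m N k "ell S Ns s" Q] mN mk ell_eq Qsum N_def by simp
    have sQs: "(\<Sum>i=1..N. Qstar N i * real (ell S Ns s i)) = real k - (\<Sum>i=1..m. Qstar N i)"
      using sum_ell[of m N k "ell S Ns s" "Qstar N"] mN mk ell_eq Qssum by simp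
    have "real (N + m) = 2 ^ k * real (Ns s)" using kb m_def
      by (metis add_diff_inverse_nat not_less of_nat_mult of_nat_numeral of_nat_power)
    hence "(\<Sum>i=1..m. Qstar N i) = log 2 (2 ^ k * real (Ns s) / real N)"
      using qstar_tele[OF N1, of m] by simp
    also have "\<dots> = real k - log 2 (real N / real (Ns s))"
      using np N1 by (simp add: log_divide_pos log_mult)
    finally have lgk: "(\<Sum>i=1..m. Qstar N i) = real k - log 2 (real N / real (Ns s))" .
    have U: "{1..N} = {1..m} \<union> {Suc m..N}" using mN by auto
    have D: "{1..m} \<inter> {Suc m..N} = {}" by auto
    have sp: "(\<Sum>i=1..N. f i) = (\<Sum>i=1..m. f i) + (\<Sum>i=Suc m..N. f i)" for f :: "nat \<Rightarrow> real"
      by (subst U, rule sum.union_disjoint) (use D in auto)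
    have e1: "(\<Sum>i=1..m. Qstar N i - Q i) = (\<Sum>i=Suc m..N. Q i - Qstar N i)"
      using sp[of Q] sp[of "Qstar N"] Qsum Qssum N_def by (simp add: sum_subtractf)
    have "(\<Sum>i=Suc m..N. Q i - Qstar N i) < (\<Sum>i=Suc m..N. \<epsilon>)"
    proof (rule sum_strict_mono)
      fix x assume "x \<in> {Suc m..N}"
      hence "x \<in> {1..totN S Ns}" using N_def by auto
      hence "Q x < Qstar (totN S Ns) x + \<epsilon>" using Qlt by blast
      thus "Q x - Qstar N x < \<epsilon>" unfolding N_def by simp
    qed (use mN in auto)
    also have "\<dots> = real (N - m) * \<epsilon>" by simp
    also have "\<dots> \<le> real N * \<epsilon>" using eps by (intro mult_right_mono) auto
    finally have "(\<Sum>i=1..m. Qstar N i - Q i) < real N * \<epsilon>" using e1 by simp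
    thus ?thesis using sQ lgk by (simp add: sum_subtractf)
  qed
  have "avg_len S p Ns Q = (\<Sum>s\<in>S. p s * (\<Sum>i=1..N. Q i * real (ell S Ns s i)))"
    by (simp add: avg_len_def N_def)
  also have "\<dots> < (\<Sum>s\<in>S. p s * (log 2 (real N / real (Ns s)) + real N * \<epsilon>))"
  proof (rule sum_strict_mono)
    show "S \<noteq> {}" using card by auto
  qed (use fin ppos per in auto)
  also have "\<dots> = (\<Sum>s\<in>S. p s * log 2 (real N / real (Ns s))) + real N * \<epsilon>"
    using psum by (simp add: distrib_left sum.distrib flip: sum_distrib_right)
  also have "(\<Sum>s\<in>S. p s * log 2 (real N / real (Ns s))) = entropy2 S p + kl2 S p (qdist S Ns)"
  proof -
    have "p s * log 2 (real N / real (Ns s)) = p s * log 2 (p s / qdist S Ns s) - p s * log 2 (p s)"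
      if s: "s \<in> S" for s
    proof -
      have np: "Ns s > 0" using Npos s by simp
      have pp: "p s > 0" using ppos s by simp
      show ?thesis using np pp N1
        by (simp add: qdist_def N_def[symmetric] log_divide_pos log_mult right_diff_distrib distrib_left)
    qed
    hence "(\<Sum>s\<in>S. p s * log 2 (real N / real (Ns s))) = (\<Sum>s\<in>S. p s * log 2 (p s / qdist S Ns s) - p s * log 2 (p s))"
      by (rule sum.cong[OF refl])
    thus ?thesis by (simp add: entropy2_def kl2_def sum_subtractf)
  qed
  finally show ?thesis by (simp add: N_def)
qed

theorem lemma2:
  fixes S :: "'a set" and p :: "'a \<Rightarrow> real" and Ns :: "'a \<Rightarrow> nat"
    and Q :: "nat \<Rightarrow> real" and \<eta> :: real
  assumes "finite S" and "card S \<ge> 2"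
    and "\<forall>s\<in>S. p s > 0" and "(\<Sum>s\<in>S. p s) = 1"
    and "\<forall>s\<in>S. Ns s > 0"
    and "totN S Ns \<ge> 2"
    and "\<eta> > 0"
    and "\<forall>i\<in>{1..totN S Ns}. Q i \<ge> 0"
    and "(\<Sum>i=1..totN S Ns. Q i) = 1"
  shows
    "((\<forall>i\<in>{1..totN S Ns}. Q i < Qstar (totN S Ns) i + \<eta> / real (totN S Ns) ^ 2)
        \<longrightarrow> avg_len S p Ns Q < entropy2 S p + kl2 S p (qdist S Ns) + \<eta> / real (totN S Ns))
   \<and> ((\<forall>i\<in>{1..totN S Ns}. Q i < Qstar (totN S Ns) i
                 + \<eta> / (real (totN S Ns) * log 2 (real (totN S Ns))))
        \<longrightarrow> avg_len S p Ns Q < entropy2 S p + kl2 S p (qdist S Ns) + \<eta> / log 2 (real (totN S Ns)))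
   \<and> ((\<forall>i\<in>{1..totN S Ns}. Q i < Qstar (totN S Ns) i + \<eta> / real (totN S Ns))
        \<longrightarrow> avg_len S p Ns Q < entropy2 S p + kl2 S p (qdist S Ns) + \<eta>)"
proof -
  define N where "N = totN S Ns"
  have Np: "real N \<ge> 2" using assms(6) N_def by simp
  have lg: "log 2 (real N) > 0" using Np by simp
  note mb = main_bound[OF assms(1-6) _ assms(9)]
  have c1: "real N * (\<eta> / real N ^ 2) = \<eta> / real N" using Np by (simp add: power2_eq_square)
  have c2: "real N * (\<eta> / (real N * log 2 (real N))) = \<eta> / log 2 (real N)" using Np by simp
  have c3: "real N * (\<eta> / real N) = \<eta>" using Np by simp
  have e1: "\<eta> / real N ^ 2 > 0" "\<eta> / (real N * log 2 (real N)) > 0" "\<eta> / real N > 0"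
    using Np lg assms(7) by auto
  have r1: "(\<forall>i\<in>{1..N}. Q i < Qstar N i + \<eta> / real N ^ 2) \<longrightarrow>
      avg_len S p Ns Q < entropy2 S p + kl2 S p (qdist S Ns) + \<eta> / real N"
  proof
    assume h: "\<forall>i\<in>{1..N}. Q i < Qstar N i + (\<eta> / real N ^ 2)"
    have "avg_len S p Ns Q < entropy2 S p + kl2 S p (qdist S Ns) + real N * (\<eta> / real N ^ 2)"
      using mb[OF e1(1)] h unfolding N_def by blast
    thus "avg_len S p Ns Q < entropy2 S p + kl2 S p (qdist S Ns) + (\<eta> / real N)" using c1 by simp
  qed
  have r2: "(\<forall>i\<in>{1..N}. Q i < Qstar N i + \<eta> / (real N * log 2 (real N))) \<longrightarrow>
      avg_len S p Ns Q < entropy2 S p + kl2 S p (qdist S Ns) + \<eta> / log 2 (real N)"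
  proof
    assume h: "\<forall>i\<in>{1..N}. Q i < Qstar N i + (\<eta> / (real N * log 2 (real N)))"
    have "avg_len S p Ns Q < entropy2 S p + kl2 S p (qdist S Ns) + real N * (\<eta> / (real N * log 2 (real N)))"
      using mb[OF e1(2)] h unfolding N_def by blast
    thus "avg_len S p Ns Q < entropy2 S p + kl2 S p (qdist S Ns) + (\<eta> / log 2 (real N))" using c2 by simp
  qed
  have r3: "(\<forall>i\<in>{1..N}. Q i < Qstar N i + \<eta> / real N) \<longrightarrow>
      avg_len S p Ns Q < entropy2 S p + kl2 S p (qdist S Ns) + \<eta>"
  proof
    assume h: "\<forall>i\<in>{1..N}. Q i < Qstar N i + (\<eta> / real N)"
    have "avg_len S p Ns Q < entropy2 S p + kl2 S p (qdist S Ns) + real N * (\<eta> / real N)"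
      using mb[OF e1(3)] h unfolding N_def by blast
    thus "avg_len S p Ns Q < entropy2 S p + kl2 S p (qdist S Ns) + (\<eta>)" using c3 by simp
  qed
  show ?thesis using r1 r2 r3 unfolding N_def by blast
qed

end
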